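(* Let $M$ be a compact manifold embedded in $\mathbb{R}^\ell$, let $A$ be a non-singular $n\times n$ integer matrix, and let $k\ge 1$ be an integer. For every $\eta>0$ there exists $\epsilon>0$ such that the following holds. Let $\rho:\Gamma_A\to\mathrm{Diff}^1(M)$ be a $C^1$ action with $d_{C^1}(\rho,\mathrm{id})<\epsilon$, and write $f=\rho(a)$, $g_i=\rho(b_i)$. Then for every $x\in M$, setting $y=f^k(x)$, for every $1\le j\le \ell$, $$\big\|(D(x))_j-A^k(D(y))_j\big\|\le \eta\sqrt{n\ell}\Big(2\max_{1\le m\le\ell}\|(D(x))_m\|+\max_{1\le m\le \ell}\|(D(y))_m\|\Big).$$
   Context: $\Gamma_A=\langle a,b_1,\dots,b_n \mid b_ib_j=b_jb_i,\ a b_i a^{-1}=\prod_j b_j^{A_{ij}}\rangle$. $M\subset\mathbb{R}^\ell$ carries the Euclidean norm; for $C^1$ maps $h:M\to\mathbb{R}^\ell$, $\|h\|_1=\sup_{x\in M}\{\|h(x)\|+\|D_xh\|\}$, $d(h,g)=\|h-g\|_1$, and $d_{C^1}(\rho,\mathrm{id})=\max\{d(\rho(a),\mathrm{id}),d(\rho(b_i),\mathrm{id}):1\le i\le n\}$. For $x\in M$, $G_i(x)=g_i(x)-x\in\mathbb{R}^\ell$, and $D(x)$ is the $n\times\ell$ displacement matrix whose $i$-th row is the row vector $G_i(x)$. $(D(x))_j\in\mathbb{R}^n$ denotes the $j$-th column of $D(x)$, and $A^k(D(y))_j$ is the matrix-vector product. *)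

theory Defs
  imports "HOL-Analysis.Analysis"
begin

section \<open>C^1 maps on open subsets of R^l\<close>

definition C1_on :: "(real^'l) set \<Rightarrow> (real^'l \<Rightarrow> real^'l) \<Rightarrow> bool" where
  "C1_on U H \<longleftrightarrow> (\<exists>H' :: (real^'l) \<Rightarrow> ((real^'l) \<Rightarrow>\<^sub>L (real^'l)).
      (\<forall>x\<in>U. (H has_derivative blinfun_apply (H' x)) (at x)) \<and> continuous_on U H')"

section \<open>Compact C^1 submanifolds of R^l\<close>

text \<open>M is an embedded C^1 submanifold of R^l of some dimension d: around every point of M there
  is a C^1 diffeomorphism (straightening chart) of open sets of R^l carrying M onto a
  d-dimensional linear subspace.\<close>
definition C1_submanifold :: "(real^'l) set \<Rightarrow> bool" where
  "C1_submanifold M \<longleftrightarrow> (\<exists>d::nat. \<forall>x\<in>M. \<exists>U V (\<phi>::real^'l \<Rightarrow> real^'l) \<psi> S.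
      open U \<and> x \<in> U \<and> open V \<and> homeomorphism U V \<phi> \<psi> \<and> C1_on U \<phi> \<and> C1_on V \<psi> \<and>
      subspace S \<and> dim S = d \<and> \<phi> ` (U \<inter> M) = V \<inter> S)"

definition compact_manifold :: "(real^'l) set \<Rightarrow> bool" where
  "compact_manifold M \<longleftrightarrow> compact M \<and> C1_submanifold M"

section \<open>Tangent spaces, C^1 maps on M, derivative norms, C^1 norm\<close>

definition tangent_space :: "(real^'l) set \<Rightarrow> real^'l \<Rightarrow> (real^'l) set" where
  "tangent_space M x = {v. \<exists>(\<gamma>::real \<Rightarrow> real^'l) e. e > 0 \<and> (\<forall>t\<in>{-e<..<e}. \<gamma> t \<in> M) \<and>
      \<gamma> 0 = x \<and> (\<gamma> has_vector_derivative v) (at 0)}"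

text \<open>A map h : M \<rightarrow> R^l is C^1 if it is the restriction of a C^1 map on an open neighbourhood of M.\<close>
definition C1_map_on :: "(real^'l) set \<Rightarrow> (real^'l \<Rightarrow> real^'l) \<Rightarrow> bool" where
  "C1_map_on M h \<longleftrightarrow> (\<exists>U H. open U \<and> M \<subseteq> U \<and> C1_on U H \<and> (\<forall>x\<in>M. H x = h x))"

text \<open>The operator norm of D_x h : T_x M \<rightarrow> R^l (a derivative of h at x within M is
  determined on T_x M).\<close>
definition deriv_norm :: "(real^'l) set \<Rightarrow> (real^'l \<Rightarrow> real^'l) \<Rightarrow> real^'l \<Rightarrow> real" where
  "deriv_norm M h x =
     (let h' = (SOME h'. (h has_derivative h') (at x within M))
      in Sup ((\<lambda>v. norm (h' v)) ` {v \<in> tangent_space M x. norm v \<le> 1}))"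

text \<open>\<parallel>h\<parallel>_1 = sup_{x \<in> M} (\<parallel>h x\<parallel> + \<parallel>D_x h\<parallel>).\<close>
definition C1_norm :: "(real^'l) set \<Rightarrow> (real^'l \<Rightarrow> real^'l) \<Rightarrow> real" where
  "C1_norm M h = Sup ((\<lambda>x. norm (h x) + deriv_norm M h x) ` M)"

text \<open>d(h, id) = \<parallel>h - id\<parallel>_1.\<close>
definition dist_C1_id :: "(real^'l) set \<Rightarrow> (real^'l \<Rightarrow> real^'l) \<Rightarrow> real" where
  "dist_C1_id M h = C1_norm M (\<lambda>x. h x - x)"

section \<open>Diff^1(M) and the action of Gamma_A\<close>

definition C1_diffeo_on :: "(real^'l) set \<Rightarrow> (real^'l \<Rightarrow> real^'l) \<Rightarrow> bool" where
  "C1_diffeo_on M h \<longleftrightarrow> bij_betw h M M \<and> C1_map_on M h \<and> C1_map_on M (inv_into M h)"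

text \<open>Integer powers of a bijection of M (as maps on M).\<close>
definition ipow :: "(real^'l) set \<Rightarrow> (real^'l \<Rightarrow> real^'l) \<Rightarrow> int \<Rightarrow> real^'l \<Rightarrow> real^'l" where
  "ipow M h m = (if m \<ge> 0 then h ^^ nat m else (inv_into M h) ^^ nat (- m))"

text \<open>A C^1 action \<rho> of
  Gamma_A = < a, b_1..b_n | b_i b_j = b_j b_i, a b_i a^-1 = prod_j b_j^(A_ij) >
  on M, given by f = \<rho>(a) and g i = \<rho>(b_i): the images of the generators are
  C^1 diffeomorphisms of M satisfying the defining relations (as maps on M).
  Since the g j commute, the product prod_j g_j^(A_ij) does not depend on the order;
  we require the relation for every enumeration of the index type.\<close>
definition GammaA_action ::
  "(real^'l) set \<Rightarrow> int^'n^'n \<Rightarrow> (real^'l \<Rightarrow> real^'l) \<Rightarrow> ('n \<Rightarrow> real^'l \<Rightarrow> real^'l) \<Rightarrow> bool" where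
  "GammaA_action M A f g \<longleftrightarrow>
     C1_diffeo_on M f \<and> (\<forall>i. C1_diffeo_on M (g i)) \<and>
     (\<forall>i j. \<forall>x\<in>M. g i (g j x) = g j (g i x)) \<and>
     (\<forall>i xs. distinct xs \<and> set xs = UNIV \<longrightarrow>
        (\<forall>x\<in>M. f (g i (inv_into M f x)) = foldr (\<lambda>j acc. ipow M (g j) (A $ i $ j) \<circ> acc) xs id x))"

text \<open>d_{C^1}(\<rho>, id).\<close>
definition dist_C1_action ::
  "(real^'l) set \<Rightarrow> (real^'l \<Rightarrow> real^'l) \<Rightarrow> ('n::finite \<Rightarrow> real^'l \<Rightarrow> real^'l) \<Rightarrow> real" where
  "dist_C1_action M f g = max (dist_C1_id M f) (Max (range (\<lambda>i. dist_C1_id M (g i))))"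

section \<open>Displacement matrix\<close>

text \<open>D(x): n \<times> l matrix whose i-th row is G_i(x) = g_i(x) - x.\<close>
definition displacement :: "('n \<Rightarrow> real^'l \<Rightarrow> real^'l) \<Rightarrow> real^'l \<Rightarrow> real^'l^'n" where
  "displacement g x = (\<chi> i. g i x - x)"

definition column :: "real^'l^'n \<Rightarrow> 'l \<Rightarrow> real^'n" where
  "column D j = (\<chi> i. D $ i $ j)"

definition mat_pow :: "real^'n^'n \<Rightarrow> nat \<Rightarrow> real^'n^'n" where
  "mat_pow B k = ((\<lambda>C. B ** C) ^^ k) (mat 1)"

end

theory Submission
  imports Defs
begin


lemma tangent_zero:
  fixes M :: "(real^'l) set"
  assumes "x \<in> M" shows "(0::real^'l) \<in> tangent_space M x"
  unfolding tangent_space_def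
  apply (rule CollectI)
  apply (rule exI[where x="\<lambda>t. x"])
  apply (rule exI[where x=1])
  using assms by (auto intro: derivative_eq_intros)

lemma tangent_scale:
  fixes M :: "(real^'l) set"
  assumes "v \<in> tangent_space M x" shows "c *\<^sub>R v \<in> tangent_space M x"
proof -
  obtain \<gamma> :: "real \<Rightarrow> real^'l" and e where g: "e > 0" "\<forall>t\<in>{-e<..<e}. \<gamma> t \<in> M" "\<gamma> 0 = x"
    "(\<gamma> has_vector_derivative v) (at 0)"
    using assms unfolding tangent_space_def by blast
  show ?thesis
  proof (cases "c = 0")
    case True
    then show ?thesis using tangent_zero[of x M] g by auto
  next
    case False
    have c1: "((\<lambda>t. c * t) has_vector_derivative c) (at 0)"
      using has_vector_derivative_real_field[of "(*) c" c 0 UNIV] by simp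
    have d: "((\<gamma> \<circ> (\<lambda>t. c * t)) has_vector_derivative (c *\<^sub>R v)) (at 0)"
      using vector_diff_chain_at[of "\<lambda>t. c * t" c 0 \<gamma> v] g(4) c1
      by simp
    have m: "\<forall>t\<in>{-(e/\<bar>c\<bar>)<..<e/\<bar>c\<bar>}. (\<gamma> \<circ> (\<lambda>t. c * t)) t \<in> M"
    proof
      fix t assume "t \<in> {-(e/\<bar>c\<bar>)<..<e/\<bar>c\<bar>}"
      then have "\<bar>t\<bar> < e / \<bar>c\<bar>" by auto
      then have "\<bar>c * t\<bar> < e" using False by (simp add: abs_mult field_simps)
      then have "c * t \<in> {-e<..<e}" by (auto simp: abs_less_iff)
      then show "(\<gamma> \<circ> (\<lambda>t. c * t)) t \<in> M" using g(2) by auto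
    qed
    show ?thesis unfolding tangent_space_def
      apply (rule CollectI)
      apply (rule exI[where x="\<gamma> \<circ> (\<lambda>t. c * t)"])
      apply (rule exI[where x="e/\<bar>c\<bar>"])
      using d m g False by auto
  qed
qed

lemma tangent_deriv_eq:
  fixes M :: "(real^'l) set"
  assumes "(h has_derivative h1) (at x within M)" "(h has_derivative h2) (at x within M)"
    and "v \<in> tangent_space M x"
  shows "h1 v = (h2 v :: 'b::real_normed_vector)"
proof -
  obtain \<gamma> :: "real \<Rightarrow> real^'l" and e where g: "e > 0" "\<forall>t\<in>{-e<..<e}. \<gamma> t \<in> M" "\<gamma> 0 = x"
    "(\<gamma> has_vector_derivative v) (at 0)"
    using assms unfolding tangent_space_def by blast
  let ?I = "{-e<..<e}"
  have sub: "\<gamma> ` ?I \<subseteq> M" using g(2) by auto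
  have gi: "(\<gamma> has_vector_derivative v) (at 0 within ?I)"
    using g(4) has_vector_derivative_at_within by blast
  have i0: "0 \<in> ?I" "open ?I" using g(1) by auto
  have "((h \<circ> \<gamma>) has_vector_derivative h1 v) (at 0)"
  proof -
    have "(h has_derivative h1) (at (\<gamma> 0) within \<gamma> ` ?I)"
      using has_derivative_subset[OF assms(1) sub] g(3) by simp
    from vector_derivative_diff_chain_within[OF gi this]
    show ?thesis by (metis has_vector_derivative_within_open i0)
  qed
  moreover have "((h \<circ> \<gamma>) has_vector_derivative h2 v) (at 0)"
  proof -
    have "(h has_derivative h2) (at (\<gamma> 0) within \<gamma> ` ?I)"
      using has_derivative_subset[OF assms(2) sub] g(3) by simp
    from vector_derivative_diff_chain_within[OF gi this]
    show ?thesis by (metis has_vector_derivative_within_open i0)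
  qed
  ultimately show ?thesis using vector_derivative_unique_at by blast
qed


lemma C1_map_on_diff_id:
  fixes M :: "(real^'l) set"
  assumes "C1_map_on M h" shows "C1_map_on M (\<lambda>x. h x - x)"
proof -
  obtain U H where U: "open U" "M \<subseteq> U" "C1_on U H" "\<forall>x\<in>M. H x = h x"
    using assms unfolding C1_map_on_def by blast
  obtain H' where H': "\<forall>x\<in>U. (H has_derivative blinfun_apply (H' x)) (at x)" "continuous_on U H'"
    using U(3) unfolding C1_on_def by blast
  have "C1_on U (\<lambda>x. H x - x)"
    unfolding C1_on_def
  proof (intro exI[where x="\<lambda>x. H' x - id_blinfun"] conjI ballI)
    fix x assume "x \<in> U"
    then have "((\<lambda>x. H x - x) has_derivative (\<lambda>v. H' x v - v)) (at x)"
      using H'(1) by (auto intro!: derivative_eq_intros)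
    moreover have "blinfun_apply (H' x - id_blinfun) = (\<lambda>v. H' x v - v)"
      by (rule ext) (simp add: blinfun.diff_left)
    ultimately show "((\<lambda>x. H x - x) has_derivative blinfun_apply (H' x - id_blinfun)) (at x)"
      by simp
  next
    show "continuous_on U (\<lambda>x. H' x - id_blinfun)"
      using H'(2) by (intro continuous_intros)
  qed
  then show ?thesis unfolding C1_map_on_def using U by (intro exI[where x=U] exI[where x="\<lambda>x. H x - x"]) auto
qed

lemma C1_norm_props:
  fixes M :: "(real^'l) set" and h :: "real^'l \<Rightarrow> real^'l"
  assumes "compact M" "C1_map_on M h" "w \<in> M"
  shows "\<exists>h'. (h has_derivative h') (at w within M) \<and>
     (\<forall>v\<in>tangent_space M w. norm (h' v) \<le> C1_norm M h * norm v) \<and> norm (h w) \<le> C1_norm M h"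
proof -
  obtain U H where U: "open U" "M \<subseteq> U" "C1_on U H" "\<forall>x\<in>M. H x = h x"
    using assms unfolding C1_map_on_def by blast
  obtain H' where H': "\<forall>x\<in>U. (H has_derivative blinfun_apply (H' x)) (at x)" "continuous_on U H'"
    using U(3) unfolding C1_on_def by blast
  have hder: "(h has_derivative blinfun_apply (H' x)) (at x within M)" if "x \<in> M" for x
  proof -
    have "(H has_derivative blinfun_apply (H' x)) (at x within M)"
      using H'(1) U(2) that has_derivative_at_withinI by blast
    then show ?thesis
      by (rule has_derivative_transform_within[where d=1]) (use that U(4) in auto)
  qed
  define T1 where "T1 x = {v \<in> tangent_space M x. norm v \<le> 1}" for x
  have T1ne: "0 \<in> T1 x" if "x \<in> M" for x
    unfolding T1_def using tangent_zero[OF that] by auto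
  have dn: "deriv_norm M h x = Sup ((\<lambda>v. norm (H' x v)) ` T1 x)" if "x \<in> M" for x
  proof -
    let ?hs = "SOME h'. (h has_derivative h') (at x within M)"
    have hs: "(h has_derivative ?hs) (at x within M)"
      by (rule someI[where P="\<lambda>h'. (h has_derivative h') (at x within M)", OF hder[OF that]])
    have "(\<lambda>v. norm (?hs v)) ` T1 x = (\<lambda>v. norm (H' x v)) ` T1 x"
      by (rule image_cong) (auto simp: T1_def intro!: arg_cong[where f=norm] tangent_deriv_eq[OF hs hder[OF that]])
    then show ?thesis unfolding deriv_norm_def Let_def T1_def by simp
  qed
  have T1b: "norm (H' x v) \<le> norm (H' x)" if "v \<in> T1 x" for x v
  proof -
    have "norm (H' x v) \<le> norm (H' x) * norm v" by (rule norm_blinfun)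
    also have "\<dots> \<le> norm (H' x) * 1" using that unfolding T1_def
      by (intro mult_left_mono) auto
    finally show ?thesis by simp
  qed
  have bddT: "bdd_above ((\<lambda>v. norm (H' x v)) ` T1 x)" for x
    using T1b by (intro bdd_aboveI2) auto
  have dn_le: "deriv_norm M h x \<le> norm (H' x)" if "x \<in> M" for x
    unfolding dn[OF that] using T1ne[OF that] T1b by (intro cSup_least) auto
  have dn_ge: "norm (H' x v) \<le> deriv_norm M h x" if "x \<in> M" "v \<in> T1 x" for x v
    unfolding dn[OF that(1)] using bddT that(2) by (intro cSup_upper) auto
  have "compact ((\<lambda>x. norm (H' x)) ` M)"
    using assms(1) H'(2) U(2) by (intro compact_continuous_image continuous_intros) (auto intro: continuous_on_subset)
  then have "bounded ((\<lambda>x. norm (H' x)) ` M)" by (rule compact_imp_bounded)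
  then obtain B1 where "\<forall>y\<in>(\<lambda>x. norm (H' x)) ` M. norm y \<le> B1" unfolding bounded_iff by blast
  then have B1: "\<forall>x\<in>M. norm (H' x) \<le> B1" by auto
  have Hc: "continuous_on U H"
    using H'(1) by (intro has_derivative_continuous_on) (auto intro: has_derivative_at_withinI)
  have "compact ((\<lambda>x. norm (H x)) ` M)"
    using assms(1) Hc U(2) by (intro compact_continuous_image continuous_intros) (auto intro: continuous_on_subset)
  then have "bounded ((\<lambda>x. norm (H x)) ` M)" by (rule compact_imp_bounded)
  then obtain B2 where "\<forall>y\<in>(\<lambda>x. norm (H x)) ` M. norm y \<le> B2" unfolding bounded_iff by blast
  then have B2: "\<forall>x\<in>M. norm (H x) \<le> B2" by auto
  have bdd: "bdd_above ((\<lambda>x. norm (h x) + deriv_norm M h x) ` M)"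
  proof (rule bdd_aboveI2)
    fix x assume "x \<in> M"
    then show "norm (h x) + deriv_norm M h x \<le> B2 + B1"
      using B1 B2 U(4) dn_le[of x] by (metis add_mono order_trans)
  qed
  have main: "norm (h w) + deriv_norm M h w \<le> C1_norm M h"
    unfolding C1_norm_def using bdd assms(3) by (intro cSup_upper) auto
  have dn0: "0 \<le> deriv_norm M h w"
    using dn_ge[OF assms(3) T1ne[OF assms(3)]] by simp
  have tv: "norm (H' w v) \<le> C1_norm M h * norm v" if "v \<in> tangent_space M w" for v
  proof (cases "v = 0")
    case True then show ?thesis by simp
  next
    case False
    let ?u = "(1 / norm v) *\<^sub>R v"
    have "?u \<in> T1 w" unfolding T1_def using tangent_scale[OF that] False by auto
    then have "norm (H' w ?u) \<le> deriv_norm M h w" using dn_ge assms(3) by blast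
    moreover have "norm (H' w ?u) = norm (H' w v) / norm v"
      by (simp add: blinfun.scaleR_right)
    ultimately have "norm (H' w v) \<le> deriv_norm M h w * norm v"
      using False by (simp add: divide_le_eq mult.commute)
    also have "\<dots> \<le> C1_norm M h * norm v"
    proof -
      have "deriv_norm M h w \<le> C1_norm M h" using main norm_ge_zero[of "h w"] by linarith
      then show ?thesis by (intro mult_right_mono) auto
    qed
    finally show ?thesis .
  qed
  show ?thesis using hder[OF assms(3)] tv main dn0 by (intro exI[where x="blinfun_apply (H' w)"]) auto
qed



definition good_path where
  "good_path M x z C p p' \<longleftrightarrow> p 0 = x \<and> p 1 = z \<and> continuous_on {0..1} p \<and> p ` {0..1} \<subseteq> M \<and>
     (\<forall>s\<in>{0<..<1}. (p has_vector_derivative p' s) (at s) \<and> p' s \<in> tangent_space M (p s) \<and>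
        norm (p' s) \<le> C * norm (z - x))"

lemma bound_on_compact:
  fixes F :: "'a::metric_space \<Rightarrow> 'b::real_normed_vector"
  assumes "compact K" "continuous_on K F"
  obtains B where "B \<ge> 0" "\<forall>x\<in>K. norm (F x) \<le> B"
proof -
  have "compact (F ` K)" by (rule compact_continuous_image[OF assms(2,1)])
  then have "bounded (F ` K)" by (rule compact_imp_bounded)
  then obtain B where "\<forall>y\<in>F ` K. norm y \<le> B" unfolding bounded_iff by blast
  then have "\<forall>x\<in>K. norm (F x) \<le> max B 0" by auto
  then show ?thesis using that[of "max B 0"] by auto
qed

lemma local_path:
  fixes M :: "(real^'l) set" and \<phi> \<psi> :: "real^'l \<Rightarrow> real^'l"
  assumes U: "open U" "x0 \<in> U" and V: "open V" and hom: "homeomorphism U V \<phi> \<psi>"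
    and c1: "C1_on U \<phi>" and c2: "C1_on V \<psi>" and S: "subspace S" and img: "\<phi> ` (U \<inter> M) = V \<inter> S"
  shows "\<exists>r>0. \<exists>L\<ge>0. \<forall>x\<in>M \<inter> ball x0 r. \<forall>z\<in>M \<inter> ball x0 r. \<exists>p p'. good_path M x z L p p'"
proof -
  obtain \<Phi>' where \<Phi>': "\<forall>x\<in>U. (\<phi> has_derivative blinfun_apply (\<Phi>' x)) (at x)" "continuous_on U \<Phi>'"
    using c1 unfolding C1_on_def by blast
  obtain \<Psi>' where \<Psi>': "\<forall>x\<in>V. (\<psi> has_derivative blinfun_apply (\<Psi>' x)) (at x)" "continuous_on V \<Psi>'"
    using c2 unfolding C1_on_def by blast
  have hom': "\<forall>x\<in>U. \<psi> (\<phi> x) = x" "\<phi> ` U = V" "continuous_on U \<phi>" "\<forall>y\<in>V. \<phi> (\<psi> y) = y"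
     "\<psi> ` V = U" "continuous_on V \<psi>"
    using hom unfolding homeomorphism_def by auto
  define y0 where "y0 = \<phi> x0"
  have y0V: "y0 \<in> V" using hom'(2) U(2) y0_def by auto
  obtain \<rho> where \<rho>: "\<rho> > 0" "cball y0 \<rho> \<subseteq> V" using V y0V open_contains_cball by blast
  obtain L2 where L2: "L2 \<ge> 0" "\<forall>y\<in>cball y0 \<rho>. norm (\<Psi>' y) \<le> L2"
    using bound_on_compact[OF compact_cball continuous_on_subset[OF \<Psi>'(2) \<rho>(2)]] by blast
  obtain r2 where r2: "r2 > 0" "cball x0 r2 \<subseteq> U" using U open_contains_cball by blast
  obtain L1 where L1: "L1 \<ge> 0" "\<forall>y\<in>cball x0 r2. norm (\<Phi>' y) \<le> L1"
    using bound_on_compact[OF compact_cball continuous_on_subset[OF \<Phi>'(2) r2(2)]] by blast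
  have "isCont \<phi> x0" using hom'(3) U continuous_on_eq_continuous_at by blast
  then obtain r1 where r1: "r1 > 0" "\<forall>x'. dist x' x0 < r1 \<longrightarrow> dist (\<phi> x') y0 < \<rho>"
    unfolding continuous_at_eps_delta y0_def using \<rho>(1) by blast
  have lip: "norm (\<phi> z - \<phi> x) \<le> L1 * norm (z - x)" if "x \<in> cball x0 r2" "z \<in> cball x0 r2" for x z
  proof (rule differentiable_bound[where S="cball x0 r2" and f'="\<lambda>x. blinfun_apply (\<Phi>' x)"])
    show "convex (cball x0 r2)" by simp
    show "(\<phi> has_derivative blinfun_apply (\<Phi>' x)) (at x within cball x0 r2)" if "x \<in> cball x0 r2" for x
      using \<Phi>'(1) r2(2) that has_derivative_at_withinI by blast
    show "onorm (blinfun_apply (\<Phi>' x)) \<le> L1" if "x \<in> cball x0 r2" for x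
      using L1(2) that by (simp add: norm_blinfun.rep_eq[symmetric])
  qed (use that in auto)
  define r where "r = min r1 r2"
  have "\<exists>p p'. good_path M x z (L2 * L1) p p'" if x: "x \<in> M \<inter> ball x0 r" and z: "z \<in> M \<inter> ball x0 r" for x z
  proof -
    have xU: "x \<in> cball x0 r2" "x \<in> U" and zU: "z \<in> cball x0 r2" "z \<in> U"
      using x z r2(2) by (auto simp: r_def dist_commute)
    define a where "a = \<phi> x"
    define b where "b = \<phi> z"
    have ab: "a \<in> ball y0 \<rho>" "b \<in> ball y0 \<rho>"
      using r1(2) x z by (auto simp: a_def b_def r_def dist_commute)
    have abS: "a \<in> S" "b \<in> S" using img x z xU zU by (auto simp: a_def b_def)
    define q where "q s = a + s *\<^sub>R (b - a)" for s :: real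
    have qball: "q s \<in> ball y0 \<rho>" if "s \<in> {0..1}" for s
    proof -
      have "(1 - s) *\<^sub>R a + s *\<^sub>R b \<in> ball y0 \<rho>"
        using that ab by (intro convexD) auto
      moreover have "(1 - s) *\<^sub>R a + s *\<^sub>R b = q s" by (simp add: q_def algebra_simps)
      ultimately show ?thesis by simp
    qed
    have qV: "q s \<in> V" if "s \<in> {0..1}" for s using qball[OF that] \<rho>(2) by auto
    have qS: "q s \<in> S" for s unfolding q_def using abS S
      by (intro subspace_add subspace_scale subspace_diff) auto
    have pM: "\<psi> (q s) \<in> M" if "s \<in> {0..1}" for s
    proof -
      have "q s \<in> \<phi> ` (U \<inter> M)" using img qV[OF that] qS by auto
      then obtain u where "u \<in> U \<inter> M" "q s = \<phi> u" by auto
      then show ?thesis using hom'(1) by auto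
    qed
    define p where "p = \<psi> \<circ> q"
    define p' where "p' s = \<Psi>' (q s) (b - a)" for s
    have qd: "(q has_vector_derivative (b - a)) (at s)" for s
      unfolding q_def by (auto intro!: derivative_eq_intros)
    have pd: "(p has_vector_derivative p' s) (at s)" if "s \<in> {0..1}" for s
    proof -
      have "(\<psi> has_derivative blinfun_apply (\<Psi>' (q s))) (at (q s) within q ` UNIV)"
        using \<Psi>'(1) qV[OF that] has_derivative_at_withinI by blast
      from vector_derivative_diff_chain_within[OF qd[of s, THEN has_vector_derivative_at_within] this]
      show ?thesis by (simp add: p_def p'_def)
    qed
    have p01: "p 0 = x" "p 1 = z" using hom'(1) xU zU by (auto simp: p_def q_def a_def b_def)
    have pc: "continuous_on {0..1} p"
    proof -
      have "continuous_on {0..1} q" unfolding q_def by (intro continuous_intros)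
      moreover have "continuous_on (q ` {0..1}) \<psi>" using hom'(6) qV by (auto intro: continuous_on_subset)
      ultimately show ?thesis unfolding p_def by (rule continuous_on_compose)
    qed
    have pimg: "p ` {0..1} \<subseteq> M" using pM by (auto simp: p_def)
    have tan: "p' s \<in> tangent_space M (p s)" if "s \<in> {0<..<1}" for s
    proof -
      define e where "e = min s (1 - s)"
      have e: "e > 0" using that by (auto simp: e_def)
      have sh: "((\<lambda>t. s + t) has_vector_derivative 1) (at 0)"
        using has_vector_derivative_real_field[of "\<lambda>t. s + t" 1 0 UNIV]
        by (auto intro!: derivative_eq_intros)
      have "((p \<circ> (\<lambda>t. s + t)) has_vector_derivative (1 *\<^sub>R p' s)) (at 0)"
        using vector_diff_chain_at[OF sh] pd[of s] that by simp
      moreover have "\<forall>t\<in>{-e<..<e}. (p \<circ> (\<lambda>t. s + t)) t \<in> M"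
      proof
        fix t assume "t \<in> {-e<..<e}"
        then have "s + t \<in> {0..1}" by (auto simp: e_def)
        then show "(p \<circ> (\<lambda>t. s + t)) t \<in> M" using pimg by auto
      qed
      ultimately show ?thesis unfolding tangent_space_def using e
        by (intro CollectI exI[where x="p \<circ> (\<lambda>t. s + t)"] exI[where x=e]) auto
    qed
    have pb: "norm (p' s) \<le> L2 * L1 * norm (z - x)" if "s \<in> {0..1}" for s
    proof -
      have "norm (p' s) \<le> norm (\<Psi>' (q s)) * norm (b - a)" unfolding p'_def by (rule norm_blinfun)
      also have "\<dots> \<le> L2 * (L1 * norm (z - x))"
      proof (rule mult_mono)
        show "norm (\<Psi>' (q s)) \<le> L2" using L2(2) qball[OF that] by auto
        show "norm (b - a) \<le> L1 * norm (z - x)" unfolding a_def b_def using lip xU zU by blast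
      qed (use L2 in auto)
      finally show ?thesis by (simp add: mult.assoc)
    qed
    show ?thesis unfolding good_path_def
      by (intro exI[where x=p] exI[where x=p']) (use p01 pc pimg pd tan pb in auto)
  qed
  moreover have "r > 0" using r1 r2 by (simp add: r_def)
  moreover have "L2 * L1 \<ge> 0" using L1 L2 by simp
  ultimately show ?thesis by blast
qed


lemma good_path_mono:
  assumes "good_path M x z L p p'" "L \<le> C" shows "good_path M x z C p p'"
proof -
  have "L * norm (z - x) \<le> C * norm (z - x)" using assms(2) by (intro mult_right_mono) auto
  then show ?thesis using assms(1) unfolding good_path_def by (meson order_trans)
qed

lemma manifold_paths:
  fixes M :: "(real^'l) set"
  assumes "compact_manifold M"
  shows "\<exists>\<delta>>0. \<exists>C\<ge>0. \<forall>x\<in>M. \<forall>z\<in>M. norm (z - x) < \<delta> \<longrightarrow> (\<exists>p p'. good_path M x z C p p')"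
proof (cases "M = {}")
  case True then show ?thesis by (intro exI[where x=1] exI[where x=0]) auto
next
  case False
  have cM: "compact M" using assms unfolding compact_manifold_def by auto
  have H: "\<forall>x0\<in>M. \<exists>r. r > 0 \<and> (\<exists>L\<ge>0. \<forall>x\<in>M \<inter> ball x0 r. \<forall>z\<in>M \<inter> ball x0 r. \<exists>p p'. good_path M x z L p p')"
  proof
    fix x0 assume x0: "x0 \<in> M"
    obtain d where "\<forall>x\<in>M. \<exists>U V (\<phi>::real^'l \<Rightarrow> real^'l) \<psi> S.
      open U \<and> x \<in> U \<and> open V \<and> homeomorphism U V \<phi> \<psi> \<and> C1_on U \<phi> \<and> C1_on V \<psi> \<and>
      subspace S \<and> dim S = d \<and> \<phi> ` (U \<inter> M) = V \<inter> S"
      using assms unfolding compact_manifold_def C1_submanifold_def by blast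
    then obtain U V \<phi> \<psi> S where ch: "open U" "x0 \<in> U" "open V" "homeomorphism U V \<phi> \<psi>" "C1_on U \<phi>" "C1_on V \<psi>"
      "subspace S" "\<phi> ` (U \<inter> M) = V \<inter> S" using x0 by meson
    show "\<exists>r. r > 0 \<and> (\<exists>L\<ge>0. \<forall>x\<in>M \<inter> ball x0 r. \<forall>z\<in>M \<inter> ball x0 r. \<exists>p p'. good_path M x z L p p')"
      using local_path[OF ch] by blast
  qed
  obtain r where r: "\<forall>x0\<in>M. r x0 > 0 \<and> (\<exists>L\<ge>0. \<forall>x\<in>M \<inter> ball x0 (r x0). \<forall>z\<in>M \<inter> ball x0 (r x0). \<exists>p p'. good_path M x z L p p')"
    using bchoice[OF H] by blast
  then have H2: "\<forall>x0\<in>M. \<exists>L. L \<ge> 0 \<and> (\<forall>x\<in>M \<inter> ball x0 (r x0). \<forall>z\<in>M \<inter> ball x0 (r x0). \<exists>p p'. good_path M x z L p p')"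
    by blast
  obtain L where L: "\<forall>x0\<in>M. L x0 \<ge> 0 \<and> (\<forall>x\<in>M \<inter> ball x0 (r x0). \<forall>z\<in>M \<inter> ball x0 (r x0). \<exists>p p'. good_path M x z (L x0) p p')"
    using bchoice[OF H2] by blast
  have cov: "M \<subseteq> (\<Union>x0\<in>M. ball x0 (r x0 / 2))"
  proof
    fix x assume "x \<in> M" then show "x \<in> (\<Union>x0\<in>M. ball x0 (r x0 / 2))" using r by force
  qed
  obtain F where F: "F \<subseteq> M" "finite F" "M \<subseteq> (\<Union>x0\<in>F. ball x0 (r x0 / 2))"
    using compactE_image[OF cM _ cov] by blast
  have Fne: "F \<noteq> {}" using F(3) False by auto
  define \<delta> where "\<delta> = Min ((\<lambda>x0. r x0 / 2) ` F)"
  define C where "C = Max (L ` F)"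
  have \<delta>0: "\<delta> > 0" unfolding \<delta>_def using F Fne r by (subst Min_gr_iff) auto
  have C0: "C \<ge> 0"
  proof -
    obtain x1 where x1: "x1 \<in> F" using Fne by auto
    have "L x1 \<le> C" unfolding C_def using F(2) x1 by (intro Max_ge) auto
    moreover have "L x1 \<ge> 0" using L x1 F(1) by auto
    ultimately show ?thesis by simp
  qed
  have "\<exists>p p'. good_path M x z C p p'" if x: "x \<in> M" and z: "z \<in> M" and xz: "norm (z - x) < \<delta>" for x z
  proof -
    obtain x0 where x0: "x0 \<in> F" "x \<in> ball x0 (r x0 / 2)" using F(3) x by auto
    have "\<delta> \<le> r x0 / 2" unfolding \<delta>_def using F(2) x0(1) by (intro Min_le) auto
    moreover have "dist x0 z \<le> dist x0 x + dist x z" by (rule dist_triangle)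
    moreover have "dist x z = norm (z - x)" by (simp add: dist_norm norm_minus_commute)
    ultimately have "dist x0 z < r x0" using x0(2) xz by simp
    moreover have "dist x0 x < r x0" using x0(2) r x0(1) F(1) by force
    ultimately have "x \<in> M \<inter> ball x0 (r x0)" "z \<in> M \<inter> ball x0 (r x0)" using x z by auto
    moreover have "x0 \<in> M" using x0(1) F(1) by auto
    ultimately obtain p p' where "good_path M x z (L x0) p p'" using L by meson
    moreover have "L x0 \<le> C" unfolding C_def using F(2) x0(1) by (intro Max_ge) auto
    ultimately show ?thesis using good_path_mono by blast
  qed
  then show ?thesis using \<delta>0 C0 by blast
qed

lemma path_lipschitz:
  fixes M :: "(real^'l) set" and h :: "real^'l \<Rightarrow> real^'l"
  assumes gp: "good_path M x z C p p'" and B: "B \<ge> 0"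
    and hd: "\<forall>w\<in>M. \<exists>h'. (h has_derivative h') (at w within M) \<and> (\<forall>v\<in>tangent_space M w. norm (h' v) \<le> B * norm v)"
  shows "norm (h z - h x) \<le> B * C * norm (z - x)"
proof -
  have gp': "p 0 = x" "p 1 = z" "continuous_on {0..1} p" "p ` {0..1} \<subseteq> M"
    "\<forall>s\<in>{0<..<1}. (p has_vector_derivative p' s) (at s) \<and> p' s \<in> tangent_space M (p s) \<and> norm (p' s) \<le> C * norm (z - x)"
    using gp unfolding good_path_def by auto
  obtain hh where hh: "\<forall>w\<in>M. (h has_derivative hh w) (at w within M) \<and> (\<forall>v\<in>tangent_space M w. norm (hh w v) \<le> B * norm v)"
    using bchoice[OF hd] by blast
  have hc: "continuous_on M h"
    using hh by (intro has_derivative_continuous_on) blast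
  have cont: "continuous_on {0..1} (h \<circ> p)"
    using continuous_on_compose[OF gp'(3) continuous_on_subset[OF hc gp'(4)]] .
  have der: "((h \<circ> p) has_derivative (\<lambda>t. t *\<^sub>R hh (p s) (p' s))) (at s)" if "0 < s" "s < 1" for s
  proof -
    let ?I = "{0<..<1::real}"
    have sI: "s \<in> ?I" using that by auto
    have pd: "(p has_vector_derivative p' s) (at s within ?I)"
      using gp'(5) sI has_vector_derivative_at_within by blast
    have sub: "p ` ?I \<subseteq> M" using gp'(4) by auto
    have psM: "p s \<in> M" using sub sI by auto
    have "(h has_derivative hh (p s)) (at (p s) within p ` ?I)"
      using hh psM has_derivative_subset[OF _ sub] by blast
    from vector_derivative_diff_chain_within[OF pd this]
    have "((h \<circ> p) has_vector_derivative hh (p s) (p' s)) (at s)"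
      using has_vector_derivative_within_open[of s ?I] sI by auto
    then show ?thesis unfolding has_vector_derivative_def .
  qed
  obtain s where s: "s \<in> {0<..<1}" "norm ((h \<circ> p) 1 - (h \<circ> p) 0) \<le> norm ((1 - 0) *\<^sub>R hh (p s) (p' s))"
    using mvt_general[OF zero_less_one cont der] by blast
  have psM: "p s \<in> M" using gp'(4) s(1) by auto
  have "norm (hh (p s) (p' s)) \<le> B * norm (p' s)" using hh psM gp'(5) s(1) by blast
  also have "\<dots> \<le> B * (C * norm (z - x))" using gp'(5) s(1) B by (intro mult_left_mono) auto
  finally show ?thesis using s(2) gp'(1,2) by (simp add: mult.assoc)
qed



fun Npow :: "nat \<Rightarrow> real" where
  "Npow 0 = 0" | "Npow (Suc n) = 6 * (Npow n + 1)"

lemma Npow_nonneg: "Npow n \<ge> 0" by (induction n) auto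
lemma Npow_Suc_ge: "Npow n \<le> Npow (Suc n)" using Npow_nonneg[of n] by simp

fun Nfold :: "('n \<Rightarrow> int) \<Rightarrow> 'n list \<Rightarrow> real" where
  "Nfold r [] = 0" | "Nfold r (j # xs) = 2 * (Npow (nat \<bar>r j\<bar>) + 1) * (Nfold r xs + 1)"

lemma Nfold_nonneg: "Nfold r xs \<ge> 0" by (induction xs) (auto simp: Npow_nonneg)

lemma Nfold_Cons_ge: "Nfold r xs \<le> Nfold r (j # xs)" "Npow (nat \<bar>r j\<bar>) \<le> Nfold r (j # xs)"
proof -
  have a: "Npow (nat \<bar>r j\<bar>) \<ge> 0" "Nfold r xs \<ge> 0" using Npow_nonneg Nfold_nonneg by auto
  have "Nfold r xs \<le> 1 * (Nfold r xs + 1)" by simp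
  also have "\<dots> \<le> (2 * (Npow (nat \<bar>r j\<bar>) + 1)) * (Nfold r xs + 1)"
    using a by (intro mult_right_mono) auto
  finally show "Nfold r xs \<le> Nfold r (j # xs)" by simp
  have "Npow (nat \<bar>r j\<bar>) \<le> (2 * (Npow (nat \<bar>r j\<bar>) + 1)) * 1" using a by simp
  also have "\<dots> \<le> (2 * (Npow (nat \<bar>r j\<bar>) + 1)) * (Nfold r xs + 1)"
    using a by (intro mult_left_mono) auto
  finally show "Npow (nat \<bar>r j\<bar>) \<le> Nfold r (j # xs)" by simp
qed

fun Kf :: "real \<Rightarrow> real \<Rightarrow> nat \<Rightarrow> real" where
  "Kf K B 0 = 0" | "Kf K B (Suc k) = K * K ^ k + B * Kf K B k"

lemma sum_delta_scaleR:
  fixes v :: "'n::finite \<Rightarrow> 'a::real_vector"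
  shows "(\<Sum>j'\<in>UNIV. (if j' = j then c else 0) *\<^sub>R v j') = c *\<^sub>R v j"
proof -
  have "(\<Sum>j'\<in>UNIV. (if j' = j then c else 0) *\<^sub>R v j') = (\<Sum>j'\<in>UNIV. if j' = j then c *\<^sub>R v j' else 0)"
    by (rule sum.cong) auto
  also have "\<dots> = c *\<^sub>R v j" by (simp add: sum.delta')
  finally show ?thesis .
qed

lemma sum_delta_abs:
  fixes j :: "'n::finite"
  shows "(\<Sum>j'\<in>UNIV. \<bar>if j' = j then c else 0\<bar>) = \<bar>c::real\<bar>"
proof -
  have "(\<Sum>j'\<in>UNIV. \<bar>if j' = j then c else 0\<bar>) = (\<Sum>j'\<in>UNIV. if j' = j then \<bar>c\<bar> else 0)"
    by (rule sum.cong) auto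
  also have "\<dots> = \<bar>c\<bar>" by (simp add: sum.delta')
  finally show ?thesis .
qed

locale ctx =
  fixes M :: "(real^'l) set" and g :: "'n::finite \<Rightarrow> real^'l \<Rightarrow> real^'l" and \<epsilon> c \<delta> :: real
  assumes gM: "\<And>j z. z \<in> M \<Longrightarrow> g j z \<in> M"
  and giM: "\<And>j z. z \<in> M \<Longrightarrow> inv_into M (g j) z \<in> M"
  and gi: "\<And>j z. z \<in> M \<Longrightarrow> g j (inv_into M (g j) z) = z"
  and gb: "\<And>j z. z \<in> M \<Longrightarrow> norm (g j z - z) \<le> \<epsilon>"
  and gl: "\<And>j x z. x \<in> M \<Longrightarrow> z \<in> M \<Longrightarrow> norm (z - x) < \<delta> \<Longrightarrow>
            norm ((g j z - z) - (g j x - x)) \<le> c * norm (z - x)"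
  and c0: "0 \<le> c" and c1: "c \<le> 1/2" and e0: "0 \<le> \<epsilon>" and ed: "\<epsilon> < \<delta>"
begin

definition Good :: "(real^'l \<Rightarrow> real^'l) \<Rightarrow> ('n \<Rightarrow> real) \<Rightarrow> real \<Rightarrow> bool" where
  "Good \<phi> a N \<longleftrightarrow> (\<forall>z\<in>M. \<phi> z \<in> M \<and> norm (\<phi> z - z) \<le> N * \<epsilon> \<and>
      (\<forall>g0. (\<forall>j. norm (g j z - z) \<le> g0) \<longrightarrow> norm (\<phi> z - z) \<le> N * g0 \<and>
          norm (\<phi> z - z - (\<Sum>j\<in>UNIV. a j *\<^sub>R (g j z - z))) \<le> N * c * g0)) \<and>
    (\<Sum>j\<in>UNIV. \<bar>a j\<bar>) \<le> N"

lemma g0_nonneg: "(\<forall>j. norm (g j z - z) \<le> g0) \<Longrightarrow> 0 \<le> g0"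
  by (meson norm_ge_zero order_trans)

lemma Good_N0: "Good \<phi> a N \<Longrightarrow> 0 \<le> N"
  unfolding Good_def by (meson order_trans sum_nonneg abs_ge_zero)

lemma Good_mono:
  assumes "Good \<phi> a N" "N \<le> N'" shows "Good \<phi> a N'"
proof -
  have N0: "0 \<le> N" using Good_N0[OF assms(1)] .
  have A1: "N * \<epsilon> \<le> N' * \<epsilon>" using assms(2) e0 by (intro mult_right_mono)
  have A: "N * g0 \<le> N' * g0" "N * c * g0 \<le> N' * c * g0" if "0 \<le> g0" for g0
    using assms(2) that c0 by (auto intro!: mult_right_mono)
  have "\<phi> z \<in> M \<and> norm (\<phi> z - z) \<le> N' * \<epsilon> \<and>
      (\<forall>g0. (\<forall>j. norm (g j z - z) \<le> g0) \<longrightarrow> norm (\<phi> z - z) \<le> N' * g0 \<and>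
          norm (\<phi> z - z - (\<Sum>j\<in>UNIV. a j *\<^sub>R (g j z - z))) \<le> N' * c * g0)" if z: "z \<in> M" for z
  proof -
    have B: "\<phi> z \<in> M" "norm (\<phi> z - z) \<le> N * \<epsilon>"
      "\<And>g0. (\<forall>j. norm (g j z - z) \<le> g0) \<Longrightarrow> norm (\<phi> z - z) \<le> N * g0 \<and>
          norm (\<phi> z - z - (\<Sum>j\<in>UNIV. a j *\<^sub>R (g j z - z))) \<le> N * c * g0"
      using assms(1) z unfolding Good_def by auto
    have "norm (\<phi> z - z) \<le> N' * g0 \<and> norm (\<phi> z - z - (\<Sum>j\<in>UNIV. a j *\<^sub>R (g j z - z))) \<le> N' * c * g0"
      if h: "\<forall>j. norm (g j z - z) \<le> g0" for g0
      using B(3)[OF h] A[OF g0_nonneg[OF h]] by linarith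
    then show ?thesis using B(1,2) A1 by auto
  qed
  moreover have "(\<Sum>j\<in>UNIV. \<bar>a j\<bar>) \<le> N'" using assms unfolding Good_def by linarith
  ultimately show ?thesis unfolding Good_def by blast
qed

lemma Good_id: "Good id (\<lambda>_. 0) 0"
  unfolding Good_def by auto

lemma Good_g: "Good (g j) (\<lambda>j'. if j' = j then 1 else 0) 1"
  unfolding Good_def using gM gb c0 g0_nonneg by (auto simp: sum_delta_scaleR sum_delta_abs)

lemma Good_ginv: "Good (inv_into M (g j)) (\<lambda>j'. if j' = j then -1 else 0) 2"
proof -
  have main: "inv_into M (g j) z \<in> M \<and> norm (inv_into M (g j) z - z) \<le> 2 * \<epsilon> \<and>
      (\<forall>g0. (\<forall>j. norm (g j z - z) \<le> g0) \<longrightarrow> norm (inv_into M (g j) z - z) \<le> 2 * g0 \<and>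
          norm (inv_into M (g j) z - z - (\<Sum>j'\<in>UNIV. (if j' = j then -1 else 0) *\<^sub>R (g j' z - z))) \<le> 2 * c * g0)"
    if z: "z \<in> M" for z
  proof -
    define w where "w = inv_into M (g j) z"
    have wM: "w \<in> M" and gw: "g j w = z" using giM gi z by (auto simp: w_def)
    have wz: "w - z = - (g j w - w)" using gw by simp
    have nwz: "norm (w - z) = norm (g j w - w)" using wz by (simp only: norm_minus_cancel)
    have b1: "norm (w - z) \<le> 2 * \<epsilon>" using nwz gb[OF wM, of j] e0 by simp
    have "norm (w - z) \<le> \<epsilon>" using nwz gb[OF wM, of j] by simp
    then have close: "norm (w - z) < \<delta>" using ed by simp
    have lip: "norm ((g j w - w) - (g j z - z)) \<le> c * norm (w - z)"
      using gl[OF z wM close] .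
    have "norm (w - z) \<le> 2 * g0 \<and> norm (w - z - (- (g j z - z))) \<le> 2 * c * g0"
      if g0: "\<forall>j. norm (g j z - z) \<le> g0" for g0
    proof -
      have "norm (g j w - w) \<le> norm (g j z - z) + norm ((g j w - w) - (g j z - z))"
        using norm_triangle_ineq[of "g j z - z" "(g j w - w) - (g j z - z)"] by simp
      also have "\<dots> \<le> g0 + c * norm (g j w - w)" using g0 lip nwz by (intro add_mono) auto
      finally have "norm (g j w - w) \<le> g0 + c * norm (g j w - w)" .
      moreover have "c * norm (g j w - w) \<le> (1/2) * norm (g j w - w)"
        using c1 by (intro mult_right_mono) auto
      ultimately have A: "norm (w - z) \<le> 2 * g0" using nwz by simp
      have "w - z - (- (g j z - z)) = - ((g j w - w) - (g j z - z))" using wz by simp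
      then have "norm (w - z - (- (g j z - z))) = norm ((g j w - w) - (g j z - z))"
        by (simp only: norm_minus_cancel)
      also have "\<dots> \<le> c * norm (w - z)" by (rule lip)
      also have "\<dots> \<le> c * (2 * g0)" using A c0 by (intro mult_left_mono)
      finally show ?thesis using A by simp
    qed
    moreover have "(\<Sum>j'\<in>UNIV. (if j' = j then -1 else 0) *\<^sub>R (g j' z - z)) = - (g j z - z)"
      by (simp add: sum_delta_scaleR)
    ultimately show ?thesis using wM b1 by (simp add: w_def)
  qed
  have "(\<Sum>j'\<in>UNIV. \<bar>if j' = j then -1 else 0\<bar>) = \<bar>-1::real\<bar>" by (rule sum_delta_abs)
  then have "(\<Sum>j'\<in>UNIV. \<bar>if j' = j then -1 else (0::real)\<bar>) \<le> 2" by simp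
  then show ?thesis unfolding Good_def using main by blast
qed

lemma Good_comp:
  assumes G1: "Good \<phi>1 a1 N1" and G2: "Good \<phi>2 a2 N2" and N2d: "N2 * \<epsilon> < \<delta>"
    and NN: "2 * (N1 + 1) * (N2 + 1) \<le> N"
  shows "Good (\<phi>1 \<circ> \<phi>2) (\<lambda>j. a1 j + a2 j) N"
proof -
  have N1: "0 \<le> N1" and N2: "0 \<le> N2" using Good_N0 G1 G2 by auto
  have sa1: "(\<Sum>j\<in>UNIV. \<bar>a1 j\<bar>) \<le> N1" and sa2: "(\<Sum>j\<in>UNIV. \<bar>a2 j\<bar>) \<le> N2"
    using G1 G2 unfolding Good_def by auto
  have pt: "(\<phi>1 \<circ> \<phi>2) z \<in> M \<and> norm ((\<phi>1 \<circ> \<phi>2) z - z) \<le> N * \<epsilon> \<and>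
      (\<forall>g0. (\<forall>j. norm (g j z - z) \<le> g0) \<longrightarrow> norm ((\<phi>1 \<circ> \<phi>2) z - z) \<le> N * g0 \<and>
          norm ((\<phi>1 \<circ> \<phi>2) z - z - (\<Sum>j\<in>UNIV. (a1 j + a2 j) *\<^sub>R (g j z - z))) \<le> N * c * g0)"
    if z: "z \<in> M" for z
  proof -
    define w where "w = \<phi>2 z"
    have wM: "w \<in> M" and wz\<epsilon>: "norm (w - z) \<le> N2 * \<epsilon>"
      and wz2: "\<And>g0. (\<forall>j. norm (g j z - z) \<le> g0) \<Longrightarrow> norm (w - z) \<le> N2 * g0 \<and>
          norm (w - z - (\<Sum>j\<in>UNIV. a2 j *\<^sub>R (g j z - z))) \<le> N2 * c * g0"
      using G2 z unfolding Good_def w_def by auto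
    have uM: "\<phi>1 w \<in> M" and uw\<epsilon>: "norm (\<phi>1 w - w) \<le> N1 * \<epsilon>"
      and uw2: "\<And>g0. (\<forall>j. norm (g j w - w) \<le> g0) \<Longrightarrow> norm (\<phi>1 w - w) \<le> N1 * g0 \<and>
          norm (\<phi>1 w - w - (\<Sum>j\<in>UNIV. a1 j *\<^sub>R (g j w - w))) \<le> N1 * c * g0"
      using G1 wM unfolding Good_def by auto
    have close: "norm (w - z) < \<delta>" using wz\<epsilon> N2d by simp
    have lipw: "norm ((g j w - w) - (g j z - z)) \<le> c * norm (w - z)" for j
      using gl[OF z wM close] .
    have NN1: "N1 * \<epsilon> + N2 * \<epsilon> \<le> N * \<epsilon>"
    proof -
      have "N1 + N2 \<le> 2 * (N1 + 1) * (N2 + 1)" using N1 N2 by (simp add: algebra_simps)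
      then have "N1 + N2 \<le> N" using NN by linarith
      then have "(N1 + N2) * \<epsilon> \<le> N * \<epsilon>" using e0 by (rule mult_right_mono)
      then show ?thesis by (simp add: distrib_right)
    qed
    have tri: "norm (\<phi>1 w - z) \<le> norm (\<phi>1 w - w) + norm (w - z)"
      using norm_triangle_ineq[of "\<phi>1 w - w" "w - z"] by simp
    have b\<epsilon>: "norm (\<phi>1 w - z) \<le> N * \<epsilon>" using tri uw\<epsilon> wz\<epsilon> NN1 by simp
    have b2: "norm (\<phi>1 w - z) \<le> N * g0 \<and>
          norm (\<phi>1 w - z - (\<Sum>j\<in>UNIV. (a1 j + a2 j) *\<^sub>R (g j z - z))) \<le> N * c * g0"
      if g0: "\<forall>j. norm (g j z - z) \<le> g0" for g0
    proof -
      have g00: "0 \<le> g0" using g0_nonneg[OF g0] .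
      have wz: "norm (w - z) \<le> N2 * g0" and er2: "norm (w - z - (\<Sum>j\<in>UNIV. a2 j *\<^sub>R (g j z - z))) \<le> N2 * c * g0"
        using wz2[OF g0] by auto
      have gw: "norm (g j w - w) \<le> (1 + N2) * g0" for j
      proof -
        have "norm (g j w - w) \<le> norm (g j z - z) + norm ((g j w - w) - (g j z - z))"
          using norm_triangle_ineq[of "g j z - z" "(g j w - w) - (g j z - z)"] by simp
        also have "\<dots> \<le> g0 + c * norm (w - z)" using g0 lipw by (intro add_mono) auto
        also have "c * norm (w - z) \<le> 1 * (N2 * g0)" using c0 c1 wz by (intro mult_mono) auto
        finally show ?thesis by (simp add: algebra_simps)
      qed
      have uw: "norm (\<phi>1 w - w) \<le> N1 * ((1 + N2) * g0)"
        and er1: "norm (\<phi>1 w - w - (\<Sum>j\<in>UNIV. a1 j *\<^sub>R (g j w - w))) \<le> N1 * c * ((1 + N2) * g0)"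
        using uw2[of "(1 + N2) * g0"] gw by auto
      have A: "norm (\<phi>1 w - z) \<le> N * g0"
      proof -
        have "norm (\<phi>1 w - z) \<le> N1 * ((1 + N2) * g0) + N2 * g0" using tri uw wz by simp
        also have "\<dots> = (N1 * (1 + N2) + N2) * g0" by (simp add: algebra_simps)
        also have "\<dots> \<le> N * g0"
        proof (rule mult_right_mono)
          have "N1 * (1 + N2) + N2 \<le> 2 * (N1 + 1) * (N2 + 1)" using N1 N2
            by (simp add: algebra_simps)
          then show "N1 * (1 + N2) + N2 \<le> N" using NN by simp
        qed (use g00 in auto)
        finally show ?thesis .
      qed
      have mid: "norm (\<Sum>j\<in>UNIV. a1 j *\<^sub>R ((g j w - w) - (g j z - z))) \<le> N1 * (c * (N2 * g0))"
      proof -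
        have "norm (\<Sum>j\<in>UNIV. a1 j *\<^sub>R ((g j w - w) - (g j z - z))) \<le> (\<Sum>j\<in>UNIV. norm (a1 j *\<^sub>R ((g j w - w) - (g j z - z))))"
          by (rule norm_sum)
        also have "\<dots> \<le> (\<Sum>j\<in>UNIV. \<bar>a1 j\<bar> * (c * (N2 * g0)))"
        proof (rule sum_mono)
          fix j
          have "norm ((g j w - w) - (g j z - z)) \<le> c * (N2 * g0)"
            using lipw[of j] wz c0 by (meson mult_left_mono order_trans)
          then show "norm (a1 j *\<^sub>R ((g j w - w) - (g j z - z))) \<le> \<bar>a1 j\<bar> * (c * (N2 * g0))"
            by (simp add: mult_left_mono)
        qed
        also have "\<dots> = (\<Sum>j\<in>UNIV. \<bar>a1 j\<bar>) * (c * (N2 * g0))" by (simp add: sum_distrib_right)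
        also have "\<dots> \<le> N1 * (c * (N2 * g0))" using sa1 c0 N2 g00 by (intro mult_right_mono) auto
        finally show ?thesis .
      qed
      define X1 where "X1 = \<phi>1 w - w - (\<Sum>j\<in>UNIV. a1 j *\<^sub>R (g j w - w))"
      define X2 where "X2 = (\<Sum>j\<in>UNIV. a1 j *\<^sub>R ((g j w - w) - (g j z - z)))"
      define X3 where "X3 = w - z - (\<Sum>j\<in>UNIV. a2 j *\<^sub>R (g j z - z))"
      have e1: "(\<Sum>j\<in>UNIV. (a1 j + a2 j) *\<^sub>R (g j z - z)) = (\<Sum>j\<in>UNIV. a1 j *\<^sub>R (g j z - z)) + (\<Sum>j\<in>UNIV. a2 j *\<^sub>R (g j z - z))"
        by (simp add: scaleR_add_left sum.distrib)
      have e2: "X2 = (\<Sum>j\<in>UNIV. a1 j *\<^sub>R (g j w - w)) - (\<Sum>j\<in>UNIV. a1 j *\<^sub>R (g j z - z))"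
        unfolding X2_def by (simp add: scaleR_diff_right sum_subtractf)
      have decomp: "\<phi>1 w - z - (\<Sum>j\<in>UNIV. (a1 j + a2 j) *\<^sub>R (g j z - z)) = X1 + X2 + X3"
        unfolding e1 e2 X1_def X3_def by (simp add: algebra_simps)
      have "norm (X1 + X2 + X3) \<le> norm X1 + norm X2 + norm X3"
        using norm_triangle_ineq[of "X1 + X2" X3] norm_triangle_ineq[of X1 X2] by linarith
      then have "norm (\<phi>1 w - z - (\<Sum>j\<in>UNIV. (a1 j + a2 j) *\<^sub>R (g j z - z))) \<le>
          N1 * c * ((1 + N2) * g0) + N1 * (c * (N2 * g0)) + N2 * c * g0"
        unfolding decomp using er1 mid er2 unfolding X1_def[symmetric] X2_def[symmetric] X3_def[symmetric]
        by linarith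
      also have "\<dots> = (N1 * (1 + N2) + N1 * N2 + N2) * (c * g0)" by (simp add: algebra_simps)
      also have "\<dots> \<le> N * (c * g0)"
      proof (rule mult_right_mono)
        have "N1 * (1 + N2) + N1 * N2 + N2 \<le> 2 * (N1 + 1) * (N2 + 1)" using N1 N2
          by (simp add: algebra_simps)
        then show "N1 * (1 + N2) + N1 * N2 + N2 \<le> N" using NN by simp
      qed (use g00 c0 in auto)
      finally show ?thesis using A by (simp add: mult.assoc)
    qed
    show ?thesis using uM b\<epsilon> b2 by (simp add: w_def)
  qed
  have "(\<Sum>j\<in>UNIV. \<bar>a1 j + a2 j\<bar>) \<le> (\<Sum>j\<in>UNIV. \<bar>a1 j\<bar> + \<bar>a2 j\<bar>)" by (intro sum_mono abs_triangle_ineq)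
  also have "\<dots> \<le> N1 + N2" using sa1 sa2 by (simp add: sum.distrib)
  also have "\<dots> \<le> 2 * (N1 + 1) * (N2 + 1)" using N1 N2 by (simp add: algebra_simps)
  also have "\<dots> \<le> N" using NN .
  finally have sumb: "(\<Sum>j\<in>UNIV. \<bar>a1 j + a2 j\<bar>) \<le> N" .
  show ?thesis unfolding Good_def using pt sumb by blast
qed

lemma Good_gpow: "Npow n * \<epsilon> < \<delta> \<Longrightarrow> Good (g j ^^ n) (\<lambda>j'. if j' = j then real n else 0) (Npow n)"
proof (induction n)
  case 0
  have "(\<lambda>j'. if j' = j then real 0 else (0::real)) = (\<lambda>_. 0)" by auto
  then show ?case using Good_id[unfolded id_def] by simp
next
  case (Suc n)
  have le: "Npow n * \<epsilon> \<le> Npow (Suc n) * \<epsilon>" using Npow_Suc_ge e0 by (intro mult_right_mono)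
  have IH: "Good (g j ^^ n) (\<lambda>j'. if j' = j then real n else 0) (Npow n)"
    using Suc le by linarith
  have "Good (g j \<circ> g j ^^ n) (\<lambda>j'. (if j' = j then 1 else 0) + (if j' = j then real n else 0)) (Npow (Suc n))"
    by (rule Good_comp[OF Good_g IH]) (use Suc le Npow_nonneg[of n] in auto)
  moreover have "(\<lambda>j'. (if j' = j then 1 else 0) + (if j' = j then real n else 0)) = (\<lambda>j'. if j' = j then real (Suc n) else 0)"
    by auto
  ultimately show ?case by (metis funpow.simps(2))
qed

lemma Good_ginvpow: "Npow n * \<epsilon> < \<delta> \<Longrightarrow> Good (inv_into M (g j) ^^ n) (\<lambda>j'. if j' = j then - real n else 0) (Npow n)"
proof (induction n)
  case 0
  have "(\<lambda>j'. if j' = j then - real 0 else (0::real)) = (\<lambda>_. 0)" by auto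
  then show ?case using Good_id[unfolded id_def] by simp
next
  case (Suc n)
  have le: "Npow n * \<epsilon> \<le> Npow (Suc n) * \<epsilon>" using Npow_Suc_ge e0 by (intro mult_right_mono)
  have IH: "Good (inv_into M (g j) ^^ n) (\<lambda>j'. if j' = j then - real n else 0) (Npow n)"
    using Suc le by linarith
  have "Good (inv_into M (g j) \<circ> inv_into M (g j) ^^ n) (\<lambda>j'. (if j' = j then -1 else 0) + (if j' = j then - real n else 0)) (Npow (Suc n))"
    by (rule Good_comp[OF Good_ginv IH]) (use Suc le Npow_nonneg[of n] in auto)
  moreover have "(\<lambda>j'. (if j' = j then -1 else 0) + (if j' = j then - real n else 0)) = (\<lambda>j'. if j' = j then - real (Suc n) else 0)"
    by auto
  ultimately show ?case by (metis funpow.simps(2))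
qed

lemma Good_ipow:
  assumes "Npow (nat \<bar>m\<bar>) * \<epsilon> < \<delta>"
  shows "Good (ipow M (g j) m) (\<lambda>j'. if j' = j then real_of_int m else 0) (Npow (nat \<bar>m\<bar>))"
proof (cases "m \<ge> 0")
  case True
  have e1: "nat \<bar>m\<bar> = nat m" using True by auto
  have e2: "(\<lambda>j'. if j' = j then real (nat m) else 0) = (\<lambda>j'. if j' = j then real_of_int m else 0)"
    using True by auto
  show ?thesis using Good_gpow[of "nat m" j] assms True unfolding e1 e2 by (simp add: ipow_def)
next
  case False
  have e1: "nat \<bar>m\<bar> = nat (-m)" using False by auto
  have e2: "(\<lambda>j'. if j' = j then - real (nat (-m)) else 0) = (\<lambda>j'. if j' = j then real_of_int m else 0)"
    using False by auto
  show ?thesis using Good_ginvpow[of "nat (-m)" j] assms False unfolding e1 e2 by (simp add: ipow_def)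
qed

lemma Good_fold:
  assumes "distinct xs" "Nfold r xs * \<epsilon> < \<delta>"
  shows "Good (foldr (\<lambda>j acc. ipow M (g j) (r j) \<circ> acc) xs id)
            (\<lambda>j'. if j' \<in> set xs then real_of_int (r j') else 0) (Nfold r xs)"
  using assms
proof (induction xs)
  case Nil
  have "(\<lambda>j'. if j' \<in> set [] then real_of_int (r j') else (0::real)) = (\<lambda>_. 0)" by auto
  then show ?case using Good_id[unfolded id_def] by simp
next
  case (Cons j xs)
  have le1: "Nfold r xs * \<epsilon> \<le> Nfold r (j # xs) * \<epsilon>" using Nfold_Cons_ge e0 by (intro mult_right_mono)
  have le2: "Npow (nat \<bar>r j\<bar>) * \<epsilon> \<le> Nfold r (j # xs) * \<epsilon>" using Nfold_Cons_ge e0 by (intro mult_right_mono)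
  have IH: "Good (foldr (\<lambda>j acc. ipow M (g j) (r j) \<circ> acc) xs id)
            (\<lambda>j'. if j' \<in> set xs then real_of_int (r j') else 0) (Nfold r xs)"
  proof (rule Cons.IH)
    show "distinct xs" using Cons.prems by simp
    show "Nfold r xs * \<epsilon> < \<delta>" using Cons.prems(2) le1 by linarith
  qed
  have G1: "Good (ipow M (g j) (r j)) (\<lambda>j'. if j' = j then real_of_int (r j) else 0) (Npow (nat \<bar>r j\<bar>))"
    using Good_ipow Cons(3) le2 by auto
  have "Good (ipow M (g j) (r j) \<circ> foldr (\<lambda>j acc. ipow M (g j) (r j) \<circ> acc) xs id)
     (\<lambda>j'. (if j' = j then real_of_int (r j) else 0) + (if j' \<in> set xs then real_of_int (r j') else 0)) (Nfold r (j # xs))"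
    by (rule Good_comp[OF G1 IH]) (use Cons le1 in auto)
  moreover have "(\<lambda>j'. (if j' = j then real_of_int (r j) else 0) + (if j' \<in> set xs then real_of_int (r j') else 0))
      = (\<lambda>j'. if j' \<in> set (j # xs) then real_of_int (r j') else 0)"
    using Cons(2) by auto
  moreover have "foldr (\<lambda>j acc. ipow M (g j) (r j) \<circ> acc) (j # xs) id =
     ipow M (g j) (r j) \<circ> foldr (\<lambda>j acc. ipow M (g j) (r j) \<circ> acc) xs id" by simp
  ultimately show ?case by metis
qed

definition rm :: "real^'l \<Rightarrow> real" where
  "rm z = Max (range (\<lambda>j. norm (g j z - z)))"

lemma rm_ge: "norm (g j z - z) \<le> rm z"
  unfolding rm_def by (intro Max_ge) auto

lemma rm_le: "(\<And>j. norm (g j z - z) \<le> B) \<Longrightarrow> rm z \<le> B"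
  unfolding rm_def by (subst Max_le_iff) auto

lemma rm_nonneg: "0 \<le> rm z"
  using rm_ge[of undefined z] norm_ge_zero order_trans by blast

end

locale ctxf = ctx M g \<epsilon> c \<delta>
  for M :: "(real^'l) set" and g :: "'n::finite \<Rightarrow> real^'l \<Rightarrow> real^'l" and \<epsilon> c \<delta> :: real +
  fixes f :: "real^'l \<Rightarrow> real^'l" and A :: "int^'n^'n" and xs0 :: "'n list" and NN :: real
  assumes fM: "\<And>z. z \<in> M \<Longrightarrow> f z \<in> M"
  and fl: "\<And>x z. x \<in> M \<Longrightarrow> z \<in> M \<Longrightarrow> norm (z - x) < \<delta> \<Longrightarrow>
            norm ((f z - z) - (f x - x)) \<le> c * norm (z - x)"
  and rel: "\<And>i z. z \<in> M \<Longrightarrow> f (g i z) = foldr (\<lambda>j acc. ipow M (g j) (A $ i $ j) \<circ> acc) xs0 id (f z)"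
  and xs0: "distinct xs0" "set xs0 = UNIV"
  and NNge: "\<And>i. Nfold (\<lambda>j. A $ i $ j) xs0 \<le> NN"
  and NNd: "NN * \<epsilon> < \<delta>"
begin

lemma Good_P: "Good (foldr (\<lambda>j acc. ipow M (g j) (A $ i $ j) \<circ> acc) xs0 id) (\<lambda>j. real_of_int (A $ i $ j)) NN"
proof -
  have le: "Nfold (\<lambda>j. A $ i $ j) xs0 * \<epsilon> \<le> NN * \<epsilon>" using NNge e0 by (intro mult_right_mono)
  have "Good (foldr (\<lambda>j acc. ipow M (g j) (A $ i $ j) \<circ> acc) xs0 id)
            (\<lambda>j'. if j' \<in> set xs0 then real_of_int (A $ i $ j') else 0) (Nfold (\<lambda>j. A $ i $ j) xs0)"
    using Good_fold[OF xs0(1), of "\<lambda>j. A $ i $ j"] le NNd by auto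
  then show ?thesis using xs0(2) Good_mono NNge by auto
qed

lemma NN0: "0 \<le> NN" using Good_N0[OF Good_P] .

definition A' :: "real^'n^'n" where "A' = map_matrix real_of_int A"

lemma one_step:
  assumes z: "z \<in> M"
  shows "rm z \<le> 2 * NN * rm (f z)"
    and "norm (column (displacement g z) j - A' *v column (displacement g (f z)) j)
           \<le> real CARD('n) * (3 * NN) * c * rm (f z)"
proof -
  define w where "w = f z"
  have wM: "w \<in> M" using fM z by (simp add: w_def)
  define e where "e i = (g i z - z) - (\<Sum>j\<in>UNIV. real_of_int (A $ i $ j) *\<^sub>R (g j w - w))" for i
  have gw: "\<forall>j. norm (g j w - w) \<le> rm w" using rm_ge by auto
  have key: "norm (g i z - z) \<le> 2 * NN * rm w \<and> norm (e i) \<le> 3 * NN * c * rm w" for i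
  proof -
    let ?P = "foldr (\<lambda>j acc. ipow M (g j) (A $ i $ j) \<circ> acc) xs0 id"
    have P1: "norm (?P w - w) \<le> NN * rm w"
      and P2: "norm (?P w - w - (\<Sum>j\<in>UNIV. real_of_int (A $ i $ j) *\<^sub>R (g j w - w))) \<le> NN * c * rm w"
      using Good_P[of i] wM gw unfolding Good_def by auto
    have fg: "f (g i z) = ?P w" using rel[OF z] by (simp add: w_def)
    define u where "u = g i z - z"
    define v where "v = ?P w - w"
    have gzM: "g i z \<in> M" using gM z by auto
    have close: "norm (g i z - z) < \<delta>" using gb[OF z, of i] ed by simp
    have "norm ((f (g i z) - g i z) - (f z - z)) \<le> c * norm (g i z - z)"
      using fl[OF z gzM close] .
    moreover have "(f (g i z) - g i z) - (f z - z) = v - u"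
      unfolding u_def v_def fg w_def by (simp add: algebra_simps)
    ultimately have vu: "norm (v - u) \<le> c * norm u" by (simp add: u_def)
    have "norm u \<le> norm v + norm (v - u)"
      using norm_triangle_ineq[of v "u - v"] by (simp add: norm_minus_commute)
    then have "norm u \<le> norm v + c * norm u" using vu by linarith
    moreover have "c * norm u \<le> (1/2) * norm u" using c1 by (intro mult_right_mono) auto
    ultimately have un: "norm u \<le> 2 * NN * rm w" using P1 unfolding v_def by linarith
    have eeq: "e i = (u - v) + (v - (\<Sum>j\<in>UNIV. real_of_int (A $ i $ j) *\<^sub>R (g j w - w)))"
      unfolding e_def u_def v_def by (simp add: algebra_simps)
    have "norm (e i) \<le> norm (u - v) + norm (v - (\<Sum>j\<in>UNIV. real_of_int (A $ i $ j) *\<^sub>R (g j w - w)))"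
      unfolding eeq by (rule norm_triangle_ineq)
    also have "\<dots> \<le> c * (2 * NN * rm w) + NN * c * rm w"
    proof (rule add_mono)
      show "norm (u - v) \<le> c * (2 * NN * rm w)"
        using vu un c0 by (metis norm_minus_commute mult_left_mono order_trans)
      show "norm (v - (\<Sum>j\<in>UNIV. real_of_int (A $ i $ j) *\<^sub>R (g j w - w))) \<le> NN * c * rm w"
        using P2 unfolding v_def .
    qed
    also have "\<dots> = 3 * NN * c * rm w" by (simp add: algebra_simps)
    finally show ?thesis using un unfolding u_def by simp
  qed
  show "rm z \<le> 2 * NN * rm (f z)" using key by (intro rm_le) (simp add: w_def)
  have col: "column (displacement g z) j - A' *v column (displacement g w) j = (\<chi> i. e i $ j)"
    by (simp add: vec_eq_iff column_def displacement_def A'_def e_def matrix_vector_mult_def)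
  have "norm (\<chi> i. e i $ j) \<le> (\<Sum>i\<in>UNIV. \<bar>e i $ j\<bar>)"
    using norm_le_l1_cart[of "\<chi> i. e i $ j"] by simp
  also have "\<dots> \<le> (\<Sum>i\<in>(UNIV::'n set). 3 * NN * c * rm w)"
    using key component_le_norm_cart order_trans by (intro sum_mono) blast
  also have "\<dots> = real CARD('n) * (3 * NN) * c * rm w" by (simp add: mult.assoc)
  finally show "norm (column (displacement g z) j - A' *v column (displacement g (f z)) j)
           \<le> real CARD('n) * (3 * NN) * c * rm (f z)" using col by (simp add: w_def)
qed


definition K1 :: real where "K1 = real CARD('n) * (3 * NN)"
definition BA :: real where "BA = onorm ((*v) A')"

lemma K1_ge: "2 * NN \<le> K1"
proof -
  have "(1::real) \<le> real CARD('n)" by simp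
  then have "1 * (3 * NN) \<le> real CARD('n) * (3 * NN)" using NN0 by (intro mult_right_mono) auto
  then show ?thesis unfolding K1_def using NN0 by simp
qed

lemma K1_nonneg: "0 \<le> K1" using K1_ge NN0 by simp

lemma k_step:
  "x \<in> M \<Longrightarrow> (\<forall>j. norm (column (displacement g x) j - mat_pow A' k *v column (displacement g ((f ^^ k) x)) j)
      \<le> Kf K1 BA k * c * rm ((f ^^ k) x)) \<and> rm x \<le> K1 ^ k * rm ((f ^^ k) x)"
proof (induction k arbitrary: x)
  case 0
  then show ?case by (simp add: mat_pow_def)
next
  case (Suc k)
  define w where "w = f x"
  have wM: "w \<in> M" using fM Suc.prems by (simp add: w_def)
  define y where "y = (f ^^ k) w"
  have fy: "(f ^^ Suc k) x = y" unfolding y_def w_def by (simp add: funpow_swap1)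
  have mp: "mat_pow A' (Suc k) = A' ** mat_pow A' k" by (simp add: mat_pow_def)
  have IH: "\<And>j. norm (column (displacement g w) j - mat_pow A' k *v column (displacement g y) j)
      \<le> Kf K1 BA k * c * rm y" "rm w \<le> K1 ^ k * rm y"
    using Suc.IH[OF wM] unfolding y_def by auto
  have os1: "rm x \<le> 2 * NN * rm w" using one_step(1)[OF Suc.prems] by (simp add: w_def)
  have os2: "\<And>j. norm (column (displacement g x) j - A' *v column (displacement g w) j) \<le> K1 * c * rm w"
    using one_step(2)[OF Suc.prems] by (simp add: w_def K1_def)
  have B0: "0 \<le> BA" unfolding BA_def by (rule onorm_pos_le) simp
  have rmw: "K1 * c * rm w \<le> K1 * c * (K1 ^ k * rm y)"
    using IH(2) K1_nonneg c0 by (intro mult_left_mono) auto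
  have col: "norm (column (displacement g x) j - mat_pow A' (Suc k) *v column (displacement g y) j)
      \<le> Kf K1 BA (Suc k) * c * rm y" for j
  proof -
    define v1 where "v1 = column (displacement g x) j - A' *v column (displacement g w) j"
    define v2 where "v2 = column (displacement g w) j - mat_pow A' k *v column (displacement g y) j"
    have eq: "column (displacement g x) j - mat_pow A' (Suc k) *v column (displacement g y) j = v1 + A' *v v2"
      unfolding v1_def v2_def mp by (simp add: matrix_vector_mul_assoc[symmetric] matrix_vector_mult_diff_distrib)
    have "norm (v1 + A' *v v2) \<le> norm v1 + norm (A' *v v2)" by (rule norm_triangle_ineq)
    also have "norm (A' *v v2) \<le> BA * norm v2" unfolding BA_def by (rule onorm) simp
    also have "BA * norm v2 \<le> BA * (Kf K1 BA k * c * rm y)"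
      using IH(1)[of j] B0 unfolding v2_def by (intro mult_left_mono) auto
    finally have "norm (v1 + A' *v v2) \<le> K1 * c * (K1 ^ k * rm y) + BA * (Kf K1 BA k * c * rm y)"
      using os2[of j] rmw unfolding v1_def by linarith
    also have "\<dots> = Kf K1 BA (Suc k) * c * rm y" by (simp add: algebra_simps)
    finally show ?thesis unfolding eq .
  qed
  have "rm x \<le> K1 * rm w"
    using os1 K1_ge rm_nonneg[of w] by (meson mult_right_mono order_trans)
  also have "\<dots> \<le> K1 * (K1 ^ k * rm y)" using IH(2) K1_nonneg by (intro mult_left_mono)
  finally have "rm x \<le> K1 ^ Suc k * rm y" by (simp add: mult.assoc)
  then show ?case using col fy by simp
qed

end

lemma map_props:
  fixes M :: "(real^'l) set" and \<phi> :: "real^'l \<Rightarrow> real^'l"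
  assumes cm: "compact_manifold M"
    and paths: "\<forall>x\<in>M. \<forall>z\<in>M. norm (z - x) < \<delta> \<longrightarrow> (\<exists>p p'. good_path M x z C p p')"
    and C0: "C \<ge> 0" and c1: "C1_map_on M \<phi>"
  shows "\<forall>w\<in>M. norm (\<phi> w - w) \<le> dist_C1_id M \<phi>"
    and "\<forall>x\<in>M. \<forall>z\<in>M. norm (z - x) < \<delta> \<longrightarrow>
          norm ((\<phi> z - z) - (\<phi> x - x)) \<le> C * dist_C1_id M \<phi> * norm (z - x)"
proof -
  define h where "h x = \<phi> x - x" for x
  have ch: "C1_map_on M h" unfolding h_def by (rule C1_map_on_diff_id[OF c1])
  have cM: "compact M" using cm unfolding compact_manifold_def by auto
  have dd: "dist_C1_id M \<phi> = C1_norm M h" unfolding dist_C1_id_def h_def by simp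
  have P: "\<exists>h'. (h has_derivative h') (at w within M) \<and>
     (\<forall>v\<in>tangent_space M w. norm (h' v) \<le> C1_norm M h * norm v) \<and> norm (h w) \<le> C1_norm M h"
    if "w \<in> M" for w
    using C1_norm_props[OF cM ch that] .
  show "\<forall>w\<in>M. norm (\<phi> w - w) \<le> dist_C1_id M \<phi>" using P unfolding dd h_def by blast
  show "\<forall>x\<in>M. \<forall>z\<in>M. norm (z - x) < \<delta> \<longrightarrow>
          norm ((\<phi> z - z) - (\<phi> x - x)) \<le> C * dist_C1_id M \<phi> * norm (z - x)"
  proof (intro ballI impI)
    fix x z assume x: "x \<in> M" and z: "z \<in> M" and xz: "norm (z - x) < \<delta>"
    obtain p p' where gp: "good_path M x z C p p'" using paths x z xz by blast
    have B0: "0 \<le> C1_norm M h" using P[OF x] norm_ge_zero order_trans by blast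
    have hd: "\<forall>w\<in>M. \<exists>h'. (h has_derivative h') (at w within M) \<and>
        (\<forall>v\<in>tangent_space M w. norm (h' v) \<le> C1_norm M h * norm v)"
      using P by blast
    have "norm (h z - h x) \<le> C1_norm M h * C * norm (z - x)"
      by (rule path_lipschitz[OF gp B0 hd])
    then show "norm ((\<phi> z - z) - (\<phi> x - x)) \<le> C * dist_C1_id M \<phi> * norm (z - x)"
      unfolding dd h_def by (simp add: mult.commute mult.left_commute)
  qed
qed

lemma Max_col_nonneg:
  fixes D :: "real^'l^'n::finite"
  shows "0 \<le> Max (range (\<lambda>m. norm (column D m)))"
proof -
  have "norm (column D undefined) \<le> Max (range (\<lambda>m. norm (column D m)))" by (intro Max_ge) auto
  then show ?thesis using norm_ge_zero order_trans by blast
qed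

theorem mainTheorem5:
  fixes M :: "(real^'l) set" and A :: "int^'n^'n" and k :: nat
  assumes "compact_manifold M"
    and "det (map_matrix real_of_int A) \<noteq> 0"
    and "k \<ge> 1"
  shows "\<forall>\<eta>>0. \<exists>\<epsilon>>0. \<forall>(f :: real^'l \<Rightarrow> real^'l) (g :: 'n \<Rightarrow> real^'l \<Rightarrow> real^'l).
     GammaA_action M A f g \<and> dist_C1_action M f g < \<epsilon> \<longrightarrow>
     (\<forall>x\<in>M. let y = (f ^^ k) x in \<forall>j.
        norm (column (displacement g x) j
              - mat_pow (map_matrix real_of_int A) k *v column (displacement g y) j)
        \<le> \<eta> * sqrt (real (CARD('n) * CARD('l))) *
           (2 * Max (range (\<lambda>m. norm (column (displacement g x) m)))
              + Max (range (\<lambda>m. norm (column (displacement g y) m)))))"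
proof (intro allI impI)
  fix \<eta> :: real assume \<eta>: "\<eta> > 0"
  obtain \<delta>0 C0 where \<delta>0: "\<delta>0 > 0" and C0: "C0 \<ge> 0"
    and paths: "\<forall>x\<in>M. \<forall>z\<in>M. norm (z - x) < \<delta>0 \<longrightarrow> (\<exists>p p'. good_path M x z C0 p p')"
    using manifold_paths[OF assms(1)] by blast
  obtain xs0 :: "'n list" where xs0: "distinct xs0" "set xs0 = UNIV"
    using finite_distinct_list[of "UNIV :: 'n set"] by auto
  define NN where "NN = (\<Sum>i\<in>UNIV. Nfold (\<lambda>j. A $ i $ j) xs0)"
  have NNge: "Nfold (\<lambda>j. A $ i $ j) xs0 \<le> NN" for i
    unfolding NN_def by (rule member_le_sum) (auto simp: Nfold_nonneg)
  have NN0: "0 \<le> NN" unfolding NN_def by (intro sum_nonneg) (simp add: Nfold_nonneg)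
  define K1' where "K1' = real CARD('n) * (3 * NN)"
  define BA' where "BA' = onorm ((*v) (map_matrix real_of_int A :: real^'n^'n))"
  define K where "K = Kf K1' BA' k"
  define L where "L = real CARD('l)"
  have L0: "0 \<le> L" unfolding L_def by simp
  define \<epsilon> where "\<epsilon> = min (1 / (2 * (C0 + 1))) (min (\<delta>0 / (2 * (NN + 1))) (\<eta> / ((\<bar>K\<bar> + 1) * (C0 + 1) * (L + 1))))"
  have \<epsilon>0: "\<epsilon> > 0" unfolding \<epsilon>_def using C0 NN0 \<delta>0 \<eta> L0 by (auto intro!: divide_pos_pos mult_pos_pos)
  show "\<exists>\<epsilon>>0. \<forall>(f :: real^'l \<Rightarrow> real^'l) (g :: 'n \<Rightarrow> real^'l \<Rightarrow> real^'l).
     GammaA_action M A f g \<and> dist_C1_action M f g < \<epsilon> \<longrightarrow>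
     (\<forall>x\<in>M. let y = (f ^^ k) x in \<forall>j.
        norm (column (displacement g x) j
              - mat_pow (map_matrix real_of_int A) k *v column (displacement g y) j)
        \<le> \<eta> * sqrt (real (CARD('n) * CARD('l))) *
           (2 * Max (range (\<lambda>m. norm (column (displacement g x) m)))
              + Max (range (\<lambda>m. norm (column (displacement g y) m)))))"
  proof (intro exI[where x=\<epsilon>] conjI allI impI)
    show "\<epsilon> > 0" by (rule \<epsilon>0)
    fix f :: "real^'l \<Rightarrow> real^'l" and g :: "'n \<Rightarrow> real^'l \<Rightarrow> real^'l"
    assume H: "GammaA_action M A f g \<and> dist_C1_action M f g < \<epsilon>"
    have act: "C1_diffeo_on M f" "\<And>i. C1_diffeo_on M (g i)"
      "\<And>i xs. distinct xs \<Longrightarrow> set xs = UNIV \<Longrightarrow>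
        (\<forall>x\<in>M. f (g i (inv_into M f x)) = foldr (\<lambda>j acc. ipow M (g j) (A $ i $ j) \<circ> acc) xs id x)"
      using H unfolding GammaA_action_def by auto
    have df: "dist_C1_id M f < \<epsilon>" using H unfolding dist_C1_action_def by auto
    have dg: "dist_C1_id M (g i) < \<epsilon>" for i
    proof -
      have "dist_C1_id M (g i) \<le> Max (range (\<lambda>i. dist_C1_id M (g i)))" by (intro Max_ge) auto
      then show ?thesis using H unfolding dist_C1_action_def by auto
    qed
    have fbij: "bij_betw f M M" and fC1: "C1_map_on M f" using act(1) unfolding C1_diffeo_on_def by auto
    have gbij: "bij_betw (g i) M M" and gC1: "C1_map_on M (g i)" for i
      using act(2)[of i] unfolding C1_diffeo_on_def by auto
    note fP = map_props[OF assms(1) paths C0 fC1]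
    have gP1: "\<forall>w\<in>M. norm (g i w - w) \<le> dist_C1_id M (g i)" for i
      using map_props(1)[OF assms(1) paths C0 gC1] .
    have gP2: "\<forall>x\<in>M. \<forall>z\<in>M. norm (z - x) < \<delta>0 \<longrightarrow>
          norm ((g i z - z) - (g i x - x)) \<le> C0 * dist_C1_id M (g i) * norm (z - x)" for i
      using map_props(2)[OF assms(1) paths C0 gC1] .
    define c where "c = C0 * \<epsilon>"
    have \<epsilon>1: "\<epsilon> \<le> 1 / (2 * (C0 + 1))" "\<epsilon> \<le> \<delta>0 / (2 * (NN + 1))"
      "\<epsilon> \<le> \<eta> / ((\<bar>K\<bar> + 1) * (C0 + 1) * (L + 1))" unfolding \<epsilon>_def by auto
    have c0: "0 \<le> c" unfolding c_def using C0 \<epsilon>0 by simp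
    have c1: "c \<le> 1/2"
    proof -
      have "c \<le> (C0 + 1) * \<epsilon>" unfolding c_def using \<epsilon>0 by (simp add: distrib_right)
      also have "\<dots> \<le> (C0 + 1) * (1 / (2 * (C0 + 1)))" using \<epsilon>1(1) C0 by (intro mult_left_mono) auto
      also have "\<dots> = 1/2" using C0 by simp
      finally show ?thesis .
    qed
    have NNd: "NN * \<epsilon> < \<delta>0"
    proof -
      have "NN * \<epsilon> \<le> (NN + 1) * \<epsilon>" using \<epsilon>0 by (simp add: distrib_right)
      also have "\<dots> \<le> (NN + 1) * (\<delta>0 / (2 * (NN + 1)))" using \<epsilon>1(2) NN0 by (intro mult_left_mono) auto
      also have "\<dots> = \<delta>0 / 2"
      proof -
        have p: "NN + 1 \<noteq> 0" using NN0 by simp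
        show ?thesis using p by (simp add: field_simps)
      qed
      finally show ?thesis using \<delta>0 by simp
    qed
    have ed: "\<epsilon> < \<delta>0"
    proof -
      have "\<epsilon> \<le> \<delta>0 / (2 * (NN + 1))" by (rule \<epsilon>1(2))
      also have "\<dots> \<le> \<delta>0 / 2" using NN0 \<delta>0 by (intro divide_left_mono) auto
      finally show ?thesis using \<delta>0 by simp
    qed
    have lipc: "C0 * d * norm (z - x) \<le> c * norm (z - x)" if "d < \<epsilon>" for d and x z :: "real^'l"
      unfolding c_def using that C0 by (intro mult_right_mono mult_left_mono) auto
    interpret ctxf M g \<epsilon> c \<delta>0 f A xs0 NN
    proof unfold_locales
      show "\<And>j z. z \<in> M \<Longrightarrow> g j z \<in> M" using gbij bij_betwE by blast
      show "\<And>j z. z \<in> M \<Longrightarrow> inv_into M (g j) z \<in> M"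
        using gbij by (metis bij_betw_def inv_into_into)
      show "\<And>j z. z \<in> M \<Longrightarrow> g j (inv_into M (g j) z) = z"
        using gbij by (metis bij_betw_def f_inv_into_f)
      show "\<And>j z. z \<in> M \<Longrightarrow> norm (g j z - z) \<le> \<epsilon>"
        using gP1 dg by (meson less_imp_le order_trans)
      show "\<And>j x z. x \<in> M \<Longrightarrow> z \<in> M \<Longrightarrow> norm (z - x) < \<delta>0 \<Longrightarrow>
            norm ((g j z - z) - (g j x - x)) \<le> c * norm (z - x)"
        using gP2 dg lipc by (meson order_trans)
      show "0 \<le> c" by (rule c0)
      show "c \<le> 1/2" by (rule c1)
      show "0 \<le> \<epsilon>" using \<epsilon>0 by simp
      show "\<epsilon> < \<delta>0" by (rule ed)
      show "\<And>z. z \<in> M \<Longrightarrow> f z \<in> M" using fbij bij_betwE by blast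
      show "\<And>x z. x \<in> M \<Longrightarrow> z \<in> M \<Longrightarrow> norm (z - x) < \<delta>0 \<Longrightarrow>
            norm ((f z - z) - (f x - x)) \<le> c * norm (z - x)"
        using fP(2) df lipc by (meson order_trans)
      show "\<And>i z. z \<in> M \<Longrightarrow> f (g i z) = foldr (\<lambda>j acc. ipow M (g j) (A $ i $ j) \<circ> acc) xs0 id (f z)"
      proof -
        fix i z assume z: "z \<in> M"
        have fz: "f z \<in> M" using fbij z bij_betwE by blast
        have "inv_into M f (f z) = z" using fbij z by (simp add: bij_betw_def inv_into_f_f)
        then show "f (g i z) = foldr (\<lambda>j acc. ipow M (g j) (A $ i $ j) \<circ> acc) xs0 id (f z)"
          using act(3)[OF xs0, of i] fz by metis
      qed
      show "distinct xs0" "set xs0 = UNIV" using xs0 by auto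
      show "\<And>i. Nfold (\<lambda>j. A $ i $ j) xs0 \<le> NN" by (rule NNge)
      show "NN * \<epsilon> < \<delta>0" by (rule NNd)
    qed
    have K1eq: "K1 = K1'" unfolding K1_def K1'_def ..
    have BAeq: "BA = BA'" unfolding BA_def BA'_def A'_def ..
    show "\<forall>x\<in>M. let y = (f ^^ k) x in \<forall>j.
        norm (column (displacement g x) j
              - mat_pow (map_matrix real_of_int A) k *v column (displacement g y) j)
        \<le> \<eta> * sqrt (real (CARD('n) * CARD('l))) *
           (2 * Max (range (\<lambda>m. norm (column (displacement g x) m)))
              + Max (range (\<lambda>m. norm (column (displacement g y) m))))"
    proof (intro ballI)
      fix x assume x: "x \<in> M"
      define y where "y = (f ^^ k) x"
      define Mx where "Mx = Max (range (\<lambda>m. norm (column (displacement g x) m)))"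
      define My where "My = Max (range (\<lambda>m. norm (column (displacement g y) m)))"
      have Mx0: "0 \<le> Mx" "0 \<le> My" unfolding Mx_def My_def by (rule Max_col_nonneg)+
      have ks: "\<And>j. norm (column (displacement g x) j - mat_pow A' k *v column (displacement g y) j)
          \<le> K * c * rm y"
        using k_step[OF x] unfolding y_def K_def K1eq BAeq by auto
      have rmy: "rm y \<le> L * My"
      proof (rule rm_le)
        fix i
        have "norm (g i y - y) \<le> (\<Sum>m\<in>UNIV. \<bar>(g i y - y) $ m\<bar>)" by (rule norm_le_l1_cart)
        also have "\<dots> \<le> (\<Sum>m\<in>(UNIV::'l set). My)"
        proof (rule sum_mono)
          fix m
          have "\<bar>(g i y - y) $ m\<bar> = \<bar>column (displacement g y) m $ i\<bar>"
            by (simp add: column_def displacement_def)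
          also have "\<dots> \<le> norm (column (displacement g y) m)" by (rule component_le_norm_cart)
          also have "\<dots> \<le> My" unfolding My_def by (intro Max_ge) auto
          finally show "\<bar>(g i y - y) $ m\<bar> \<le> My" .
        qed
        also have "\<dots> = L * My" by (simp add: L_def)
        finally show "norm (g i y - y) \<le> L * My" .
      qed
      have keps: "\<bar>K\<bar> * C0 * L * \<epsilon> \<le> \<eta>"
      proof -
        have "\<bar>K\<bar> * C0 * L \<le> (\<bar>K\<bar> + 1) * (C0 + 1) * (L + 1)"
          using C0 L0 by (intro mult_mono) auto
        then have "\<bar>K\<bar> * C0 * L * \<epsilon> \<le> (\<bar>K\<bar> + 1) * (C0 + 1) * (L + 1) * \<epsilon>"
          using \<epsilon>0 by (intro mult_right_mono) auto
        also have "\<dots> \<le> (\<bar>K\<bar> + 1) * (C0 + 1) * (L + 1) * (\<eta> / ((\<bar>K\<bar> + 1) * (C0 + 1) * (L + 1)))"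
          using \<epsilon>1(3) C0 L0 by (intro mult_left_mono) auto
        also have "\<dots> = \<eta>" using C0 L0 by simp
        finally show ?thesis .
      qed
      have "(1::nat) \<le> CARD('n) * CARD('l)"
      proof -
        have a: "0 < CARD('n)" by (rule finite_UNIV_card_ge_0) simp
        have b: "0 < CARD('l)" by (rule finite_UNIV_card_ge_0) simp
        have "0 < CARD('n) * CARD('l)" using a b by simp
        then show ?thesis by simp
      qed
      then have r: "1 \<le> real (CARD('n) * CARD('l))" by (metis of_nat_1 of_nat_le_iff)
      have sq: "1 \<le> sqrt (real (CARD('n) * CARD('l)))"
        using real_sqrt_le_mono[OF r] by (metis real_sqrt_one)
      have "\<forall>j. norm (column (displacement g x) j
              - mat_pow (map_matrix real_of_int A) k *v column (displacement g y) j)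
        \<le> \<eta> * sqrt (real (CARD('n) * CARD('l))) * (2 * Mx + My)"
      proof
        fix j
        have "norm (column (displacement g x) j - mat_pow A' k *v column (displacement g y) j)
            \<le> K * c * rm y" by (rule ks)
        also have "\<dots> \<le> \<bar>K\<bar> * c * (L * My)"
        proof -
          have "K * c * rm y \<le> \<bar>K\<bar> * c * rm y" using c0 rm_nonneg[of y]
            by (intro mult_right_mono) (auto simp: mult_right_mono)
          also have "\<dots> \<le> \<bar>K\<bar> * c * (L * My)" using rmy c0 by (intro mult_left_mono) auto
          finally show ?thesis .
        qed
        also have "\<dots> = (\<bar>K\<bar> * C0 * L * \<epsilon>) * My" unfolding c_def by (simp add: algebra_simps)
        also have "\<dots> \<le> \<eta> * My" using keps Mx0 by (intro mult_right_mono) auto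
        also have "\<dots> \<le> \<eta> * (sqrt (real (CARD('n) * CARD('l))) * (2 * Mx + My))"
        proof (rule mult_left_mono)
          have "My \<le> 1 * (2 * Mx + My)" using Mx0 by simp
          also have "\<dots> \<le> sqrt (real (CARD('n) * CARD('l))) * (2 * Mx + My)"
            using sq Mx0 by (intro mult_right_mono) auto
          finally show "My \<le> sqrt (real (CARD('n) * CARD('l))) * (2 * Mx + My)" .
        qed (use \<eta> in auto)
        finally show "norm (column (displacement g x) j
              - mat_pow (map_matrix real_of_int A) k *v column (displacement g y) j)
        \<le> \<eta> * sqrt (real (CARD('n) * CARD('l))) * (2 * Mx + My)" by (simp add: A'_def mult.assoc)
      qed
      then show "let y = (f ^^ k) x in \<forall>j.
        norm (column (displacement g x) j
              - mat_pow (map_matrix real_of_int A) k *v column (displacement g y) j)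
        \<le> \<eta> * sqrt (real (CARD('n) * CARD('l))) *
           (2 * Max (range (\<lambda>m. norm (column (displacement g x) m)))
              + Max (range (\<lambda>m. norm (column (displacement g y) m))))"
        unfolding Let_def y_def[symmetric] Mx_def[symmetric] My_def[symmetric] .
    qed
  qed
qed

end
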